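(* Let $G$ be a finitely generated group such that $[e]_g$ is a subgroup of $G$ for every $g\in G$. Suppose that for every sequence $g_1,g_2,\dots$ of elements of $G$ the intersection $\bigcap_{k\ge1}[e]_{[g_1,\dots,g_k]}$ is trivial. Then for every $k\ge1$ either $\gamma_k(G)=\{e\}$ or $\gamma_k(G)\neq\gamma_{k+1}(G)$.
   Context: $[x,y]=x^{-1}y^{-1}xy$, left-normed commutators $[y_1,\dots,y_{m+1}]=[[y_1,\dots,y_m],y_{m+1}]$, $[y_1]=y_1$. For $g\in G$, $[e]_g=\{[x,g]\mid x\in G\}$. $\gamma_1(G)=G$, $\gamma_{k+1}(G)=[\gamma_k(G),G]$. *)

theory Defs
  imports "HOL-Algebra.Algebra"
begin

definition commutator :: "('a, 'b) monoid_scheme \<Rightarrow> 'a \<Rightarrow> 'a \<Rightarrow> 'a" where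
  "commutator G x y = inv\<^bsub>G\<^esub> x \<otimes>\<^bsub>G\<^esub> inv\<^bsub>G\<^esub> y \<otimes>\<^bsub>G\<^esub> x \<otimes>\<^bsub>G\<^esub> y"

fun lncomm :: "('a, 'b) monoid_scheme \<Rightarrow> (nat \<Rightarrow> 'a) \<Rightarrow> nat \<Rightarrow> 'a" where
  "lncomm G g 0 = g 0"
| "lncomm G g (Suc n) = commutator G (lncomm G g n) (g (Suc n))"

definition commset :: "('a, 'b) monoid_scheme \<Rightarrow> 'a \<Rightarrow> 'a set" where
  "commset G g = {commutator G x g | x. x \<in> carrier G}"

text \<open>Lower central series: gamma_1 = G, gamma_(k+1) = [gamma_k, G]
  (the subgroup generated by all [x,y] with x in gamma_k, y in G).
  The index 0 is not used; by convention it is also G.\<close>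
fun lower_central :: "('a, 'b) monoid_scheme \<Rightarrow> nat \<Rightarrow> 'a set" where
  "lower_central G 0 = carrier G"
| "lower_central G (Suc 0) = carrier G"
| "lower_central G (Suc (Suc k)) =
     generate G {commutator G x y | x y. x \<in> lower_central G (Suc k) \<and> y \<in> carrier G}"

definition finitely_generated :: "('a, 'b) monoid_scheme \<Rightarrow> bool" where
  "finitely_generated G \<longleftrightarrow> (\<exists>S. finite S \<and> S \<subseteq> carrier G \<and> generate G S = carrier G)"

end

theory Submission
  imports Defs
begin


context group begin

lemma cc1 [simp]: "x \<in> carrier G \<Longrightarrow> y \<in> carrier G \<Longrightarrow> x \<otimes> (inv x \<otimes> y) = y"
  by (simp add: m_assoc[symmetric])
lemma cc2 [simp]: "x \<in> carrier G \<Longrightarrow> y \<in> carrier G \<Longrightarrow> inv x \<otimes> (x \<otimes> y) = y"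
  by (simp add: m_assoc[symmetric])

lemma comm_closed [simp]: "x \<in> carrier G \<Longrightarrow> y \<in> carrier G \<Longrightarrow> commutator G x y \<in> carrier G"
  by (simp add: commutator_def)

lemma comm_inv: "x \<in> carrier G \<Longrightarrow> y \<in> carrier G \<Longrightarrow> inv (commutator G x y) = commutator G y x"
  by (simp add: commutator_def inv_mult_group m_assoc)

lemma comm_mult_left: "g \<in> carrier G \<Longrightarrow> h \<in> carrier G \<Longrightarrow> x \<in> carrier G \<Longrightarrow>
  commutator G (g \<otimes> h) x = inv h \<otimes> commutator G g x \<otimes> h \<otimes> commutator G h x"
  by (simp add: commutator_def inv_mult_group m_assoc)

lemma comm_inv_left: "g \<in> carrier G \<Longrightarrow> x \<in> carrier G \<Longrightarrow>
  commutator G (inv g) x = g \<otimes> inv (commutator G g x) \<otimes> inv g"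
  by (simp add: commutator_def inv_mult_group m_assoc)

lemma comm_conj: "g \<in> carrier G \<Longrightarrow> h \<in> carrier G \<Longrightarrow> x \<in> carrier G \<Longrightarrow>
  commutator G (inv h \<otimes> g \<otimes> h) x = inv h \<otimes> commutator G g (h \<otimes> x \<otimes> inv h) \<otimes> h"
  by (simp add: commutator_def inv_mult_group m_assoc)

lemma comm_conj2: "c \<in> carrier G \<Longrightarrow> h \<in> carrier G \<Longrightarrow> x \<in> carrier G \<Longrightarrow>
  h \<otimes> commutator G x c \<otimes> inv h = commutator G (x \<otimes> inv h) c \<otimes> inv (commutator G (inv h) c)"
  by (simp add: commutator_def inv_mult_group m_assoc)

lemma comm_conjclass: "c \<in> carrier G \<Longrightarrow> x \<in> carrier G \<Longrightarrow>
  c \<otimes> inv (commutator G x c) = inv x \<otimes> c \<otimes> x"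
  by (simp add: commutator_def inv_mult_group m_assoc)


definition cenmod :: "'a set \<Rightarrow> 'a set" where
  "cenmod M = {g \<in> carrier G. \<forall>x\<in>carrier G. commutator G g x \<in> M}"

lemma Ex_subgroup:
  assumes M: "M \<lhd> G" and x: "x \<in> carrier G"
  shows "subgroup {g \<in> carrier G. commutator G g x \<in> M} G"
proof (rule subgroupI)
  interpret normal M G by fact
  show "{g \<in> carrier G. commutator G g x \<in> M} \<noteq> {}"
    using x by (rule_tac ex_in_conv[THEN iffD1, OF exI[of _ \<one>]]) (simp add: commutator_def)
  fix a assume a: "a \<in> {g \<in> carrier G. commutator G g x \<in> M}"
  then have "a \<otimes> inv (commutator G a x) \<otimes> inv a \<in> M"
    using inv_op_closed2 by (simp add: x)
  then show "inv a \<in> {g \<in> carrier G. commutator G g x \<in> M}"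
    using a x by (simp add: comm_inv_left)
next
  interpret normal M G by fact
  fix a b assume a: "a \<in> {g \<in> carrier G. commutator G g x \<in> M}"
    and b: "b \<in> {g \<in> carrier G. commutator G g x \<in> M}"
  then have "inv b \<otimes> commutator G a x \<otimes> b \<in> M"
    using inv_op_closed1 by simp
  then have "inv b \<otimes> commutator G a x \<otimes> b \<otimes> commutator G b x \<in> M"
    using b by simp
  then show "a \<otimes> b \<in> {g \<in> carrier G. commutator G g x \<in> M}"
    using a b x by (simp add: comm_mult_left)
qed auto

lemma comm_conj3: "g \<in> carrier G \<Longrightarrow> h \<in> carrier G \<Longrightarrow> y \<in> carrier G \<Longrightarrow>
  commutator G (h \<otimes> g \<otimes> inv h) y = h \<otimes> commutator G g (inv h \<otimes> y \<otimes> h) \<otimes> inv h"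
  by (simp add: commutator_def inv_mult_group m_assoc)

lemma cenmod_normal:
  assumes M: "M \<lhd> G"
  shows "cenmod M \<lhd> G" "M \<subseteq> cenmod M"
proof -
  interpret normal M G by fact
  have sg: "subgroup (cenmod M) G"
  proof (rule subgroupI)
    show "cenmod M \<subseteq> carrier G" unfolding cenmod_def by blast
    have "\<one> \<in> cenmod M"
      unfolding cenmod_def using subgroup.one_closed[OF Ex_subgroup[OF M]] by simp
    then show "cenmod M \<noteq> {}" by blast
  next
    fix a assume a: "a \<in> cenmod M"
    show "inv a \<in> cenmod M" unfolding cenmod_def
    proof (intro CollectI conjI ballI)
      show "inv a \<in> carrier G" using a unfolding cenmod_def by simp
      fix x assume x: "x \<in> carrier G"
      have "a \<in> {g \<in> carrier G. commutator G g x \<in> M}" using a x unfolding cenmod_def by simp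
      then show "commutator G (inv a) x \<in> M"
        using subgroup.m_inv_closed[OF Ex_subgroup[OF M x]] by simp
    qed
  next
    fix a b assume a: "a \<in> cenmod M" and b: "b \<in> cenmod M"
    show "a \<otimes> b \<in> cenmod M" unfolding cenmod_def
    proof (intro CollectI conjI ballI)
      show "a \<otimes> b \<in> carrier G" using a b unfolding cenmod_def by simp
      fix x assume x: "x \<in> carrier G"
      have "a \<in> {g \<in> carrier G. commutator G g x \<in> M}" using a x unfolding cenmod_def by simp
      moreover have "b \<in> {g \<in> carrier G. commutator G g x \<in> M}" using b x unfolding cenmod_def by simp
      ultimately show "commutator G (a \<otimes> b) x \<in> M"
        using subgroup.m_closed[OF Ex_subgroup[OF M x]] by simp
    qed
  qed
  show "cenmod M \<lhd> G"
    unfolding normal_inv_iff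
  proof (intro conjI sg ballI)
    fix x h assume x: "x \<in> carrier G" and h: "h \<in> cenmod M"
    show "x \<otimes> h \<otimes> inv x \<in> cenmod M"
      unfolding cenmod_def
    proof (intro CollectI conjI ballI)
      have hc: "h \<in> carrier G" using h unfolding cenmod_def by blast
      show "x \<otimes> h \<otimes> inv x \<in> carrier G" using x hc by simp
      fix y assume y: "y \<in> carrier G"
      have "inv x \<otimes> y \<otimes> x \<in> carrier G" using x y by simp
      then have "commutator G h (inv x \<otimes> y \<otimes> x) \<in> M" using h unfolding cenmod_def by blast
      then have "x \<otimes> commutator G h (inv x \<otimes> y \<otimes> x) \<otimes> inv x \<in> M"
        using inv_op_closed2 x by simp
      then show "commutator G (x \<otimes> h \<otimes> inv x) y \<in> M"
        using x y hc by (simp add: comm_conj3)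
    qed
  qed
  show "M \<subseteq> cenmod M"
  proof
    fix m assume m: "m \<in> M"
    have "\<forall>x\<in>carrier G. commutator G m x \<in> M"
    proof
      fix x assume x: "x \<in> carrier G"
      have "inv x \<otimes> m \<otimes> x \<in> M" using inv_op_closed1 x m by simp
      then have "inv m \<otimes> (inv x \<otimes> m \<otimes> x) \<in> M" using m by simp
      then show "commutator G m x \<in> M" using m x by (simp add: commutator_def m_assoc)
    qed
    then show "m \<in> cenmod M" using m by (simp add: cenmod_def)
  qed
qed

lemma commset_normal:
  assumes c: "c \<in> carrier G" and sg: "subgroup (commset G c) G"
  shows "commset G c \<lhd> G"
  unfolding normal_inv_iff
proof (intro conjI sg ballI)
  fix x h assume x: "x \<in> carrier G" and h: "h \<in> commset G c"
  then obtain y where y: "y \<in> carrier G" "h = commutator G y c" by (auto simp: commset_def)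
  have a: "commutator G (y \<otimes> inv x) c \<in> commset G c" using x y by (auto simp: commset_def)
  have b: "commutator G (inv x) c \<in> commset G c" using x y by (auto simp: commset_def)
  have "commutator G (y \<otimes> inv x) c \<otimes> inv (commutator G (inv x) c) \<in> commset G c"
    using a b sg subgroup.m_closed subgroup.m_inv_closed by metis
  then show "x \<otimes> h \<otimes> inv x \<in> commset G c"
    using x y c by (simp add: comm_conj2)
qed

end


context group begin

lemma lc_subgroup: "subgroup (lower_central G (Suc i)) G"
proof (induction i)
  case 0 then show ?case by (simp add: subgroup_self)
next
  case (Suc i)
  have "{commutator G x y | x y. x \<in> lower_central G (Suc i) \<and> y \<in> carrier G} \<subseteq> carrier G"
    using subgroup.mem_carrier[OF Suc.IH] by auto
  then show ?case by (simp add: generate_is_subgroup)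
qed

lemma lc_compact:
  assumes S: "finite S" "S \<subseteq> carrier G" "generate G S = carrier G"
  shows "\<exists>F. finite F \<and> F \<subseteq> lower_central G (Suc i) \<and> (\<forall>M. M \<lhd> G \<longrightarrow> F \<subseteq> M \<longrightarrow> lower_central G (Suc i) \<subseteq> M)"
proof (induction i)
  case 0
  show ?case
  proof (intro exI conjI allI impI)
    fix M assume "M \<lhd> G" "S \<subseteq> M"
    then show "lower_central G (Suc 0) \<subseteq> M"
      using generate_subgroup_incl[of S M] S normal_imp_subgroup[of M G] by auto
  qed (use S in auto)
next
  case (Suc i)
  then obtain F where F0: "finite F" "F \<subseteq> lower_central G (Suc i)"
    "\<And>M. M \<lhd> G \<Longrightarrow> F \<subseteq> M \<Longrightarrow> lower_central G (Suc i) \<subseteq> M" by blast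
  have F: "finite F" "F \<subseteq> carrier G"
    "\<And>M. M \<lhd> G \<Longrightarrow> F \<subseteq> M \<Longrightarrow> lower_central G (Suc i) \<subseteq> M"
    using F0 subgroup.subset[OF lc_subgroup[of i]] by auto
  define F' where "F' = (\<lambda>(f,s). commutator G f s) ` (F \<times> S)"
  show ?case
  proof (intro exI conjI allI impI)
    show "finite F'" unfolding F'_def using F S by simp
    have "F' \<subseteq> {commutator G x y | x y. x \<in> lower_central G (Suc i) \<and> y \<in> carrier G}"
      unfolding F'_def using F0(2) S(2) by fast
    also have "\<dots> \<subseteq> lower_central G (Suc (Suc i))"
      by (simp only: lower_central.simps) (blast intro: generate.incl)
    finally show "F' \<subseteq> lower_central G (Suc (Suc i))" .
    fix M assume M: "M \<lhd> G" and FM: "F' \<subseteq> M"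
    interpret normal M G by fact
    have "F \<subseteq> cenmod M"
    proof
      fix f assume f: "f \<in> F"
      have fc: "f \<in> carrier G" using f F by auto
      have "S \<subseteq> {g \<in> carrier G. commutator G g f \<in> M}"
      proof
        fix s assume s: "s \<in> S"
        have sc: "s \<in> carrier G" using s S by auto
        have "commutator G f s \<in> M" using FM f s unfolding F'_def by auto
        then have "inv (commutator G f s) \<in> M" by simp
        then show "s \<in> {g \<in> carrier G. commutator G g f \<in> M}" using fc sc by (simp add: comm_inv)
      qed
      then have "generate G S \<subseteq> {g \<in> carrier G. commutator G g f \<in> M}"
        by (rule generate_subgroup_incl[OF _ Ex_subgroup[OF M fc]])
      then have "carrier G \<subseteq> {g \<in> carrier G. commutator G g f \<in> M}"
        using S(3) by simp
      then have "\<forall>x\<in>carrier G. commutator G f x \<in> M"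
      proof (intro ballI)
        fix x assume "x \<in> carrier G" "carrier G \<subseteq> {g \<in> carrier G. commutator G g f \<in> M}"
        then have "commutator G x f \<in> M" by auto
        then have "inv (commutator G x f) \<in> M" by simp
        then show "commutator G f x \<in> M" using fc \<open>x \<in> carrier G\<close> by (simp add: comm_inv)
      qed
      then show "f \<in> cenmod M" using fc unfolding cenmod_def by simp
    qed
    then have "lower_central G (Suc i) \<subseteq> cenmod M" using F(3)[OF cenmod_normal(1)[OF M]] by simp
    then have "{commutator G x y | x y. x \<in> lower_central G (Suc i) \<and> y \<in> carrier G} \<subseteq> M"
      unfolding cenmod_def by auto
    then show "lower_central G (Suc (Suc i)) \<subseteq> M"
      using generate_subgroup_incl[OF _ normal_imp_subgroup[OF M]] by (simp only: lower_central.simps)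
  qed
qed

end


lemma (in group) union_chain_normal:
  assumes ne: "CC \<noteq> {}" and ch: "\<forall>U\<in>CC. \<forall>V\<in>CC. U \<subseteq> V \<or> V \<subseteq> U"
    and nm: "\<forall>U\<in>CC. U \<lhd> G"
  shows "\<Union>CC \<lhd> G"
  unfolding normal_inv_iff
proof (intro conjI ballI)
  have sg: "\<And>U. U \<in> CC \<Longrightarrow> subgroup U G" using nm normal_imp_subgroup by blast
  show "subgroup (\<Union>CC) G"
  proof (rule subgroupI)
    show "\<Union>CC \<subseteq> carrier G" using sg subgroup.subset by (metis Union_least)
    obtain U where U: "U \<in> CC" using ne by blast
    then have "\<one> \<in> U" using sg subgroup.one_closed by metis
    then show "\<Union>CC \<noteq> {}" using U by blast
  next
    fix a assume "a \<in> \<Union>CC"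
    then obtain U where U: "U \<in> CC" "a \<in> U" by blast
    then have "inv a \<in> U" using sg subgroup.m_inv_closed by metis
    then show "inv a \<in> \<Union>CC" using U by blast
  next
    fix a b assume "a \<in> \<Union>CC" "b \<in> \<Union>CC"
    then obtain U V where UV: "U \<in> CC" "a \<in> U" "V \<in> CC" "b \<in> V" by blast
    show "a \<otimes> b \<in> \<Union>CC"
    proof (cases "U \<subseteq> V")
      case True
      then have "a \<otimes> b \<in> V" using UV sg subgroup.m_closed by (metis subsetD)
      then show ?thesis using UV by blast
    next
      case False
      then have "V \<subseteq> U" using ch UV by blast
      then have "a \<otimes> b \<in> U" using UV sg subgroup.m_closed by (metis subsetD)
      then show ?thesis using UV by blast
    qed
  qed
next
  fix x h assume x: "x \<in> carrier G" and "h \<in> \<Union>CC"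
  then obtain U where U: "U \<in> CC" "h \<in> U" by blast
  then have "x \<otimes> h \<otimes> inv x \<in> U" using nm x normal.inv_op_closed2 by metis
  then show "x \<otimes> h \<otimes> inv x \<in> \<Union>CC" using U by blast
qed

lemma (in group) main_aux:
  assumes fg: "finitely_generated G"
    and h3: "\<forall>g \<in> carrier G. subgroup (commset G g) G"
  shows "lower_central G (Suc i) = {\<one>} \<or> lower_central G (Suc i) \<noteq> lower_central G (Suc (Suc i))"
proof (rule ccontr)
  define N where "N = lower_central G (Suc i)"
  assume "\<not> ?thesis"
  then have N1: "N \<noteq> {\<one>}" and NN: "N = lower_central G (Suc (Suc i))"
    unfolding N_def by auto
  have Ngen: "N = generate G {commutator G x y | x y. x \<in> N \<and> y \<in> carrier G}"
    using NN unfolding N_def by simp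
  have Nsg: "subgroup N G" unfolding N_def by (rule lc_subgroup)
  obtain S where S: "finite S" "S \<subseteq> carrier G" "generate G S = carrier G"
    using fg unfolding finitely_generated_def by blast
  obtain F where F: "finite F" "F \<subseteq> N"
    "\<And>M. M \<lhd> G \<Longrightarrow> F \<subseteq> M \<Longrightarrow> N \<subseteq> M"
    using lc_compact[OF S, of i] unfolding N_def by blast
  define A where "A = {M. M \<lhd> G \<and> \<not> N \<subseteq> M}"
  have "{\<one>} \<in> A"
  proof -
    have "\<not> N \<subseteq> {\<one>}" using N1 subgroup.one_closed[OF Nsg] by blast
    then show ?thesis unfolding A_def using one_is_normal by blast
  qed
  then have "A \<noteq> {}" by blast
  have "\<exists>M\<in>A. \<forall>W\<in>A. M \<subseteq> W \<longrightarrow> W = M"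
  proof (rule subset_Zorn_nonempty[OF \<open>A \<noteq> {}\<close>])
    fix CC assume Cne: "CC \<noteq> {}" and ch: "subset.chain A CC"
    have chA: "CC \<subseteq> A" and cmp: "\<forall>U\<in>CC. \<forall>V\<in>CC. U \<subseteq> V \<or> V \<subseteq> U"
      using ch unfolding subset_chain_def by auto
    have nm: "\<forall>U\<in>CC. U \<lhd> G" using chA unfolding A_def by blast
    have "\<not> N \<subseteq> \<Union>CC"
    proof
      assume "N \<subseteq> \<Union>CC"
      then have "F \<subseteq> \<Union>CC" using F(2) by blast
      then obtain U where U: "U \<in> CC" "F \<subseteq> U"
        using finite_subset_Union_chain[OF F(1) _ Cne ch] by blast
      then have "N \<subseteq> U" using F(3) nm by blast
      then show False using U chA unfolding A_def by blast
    qed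
    then show "\<Union>CC \<in> A" unfolding A_def using union_chain_normal[OF Cne cmp nm] by blast
  qed
  then obtain M where MA: "M \<in> A" and Mmax: "\<And>W. W \<in> A \<Longrightarrow> M \<subseteq> W \<Longrightarrow> W = M"
    by blast
  have Mn: "M \<lhd> G" and NM: "\<not> N \<subseteq> M" using MA unfolding A_def by auto
  interpret Mnorm: normal M G by fact
  have "\<not> N \<subseteq> cenmod M"
  proof
    assume "N \<subseteq> cenmod M"
    then have "{commutator G x y | x y. x \<in> N \<and> y \<in> carrier G} \<subseteq> M"
      unfolding cenmod_def by auto
    then have "generate G {commutator G x y | x y. x \<in> N \<and> y \<in> carrier G} \<subseteq> M"
      by (rule generate_subgroup_incl[OF _ normal_imp_subgroup[OF Mn]])
    then have "N \<subseteq> M" using Ngen by simp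
    then show False using NM by blast
  qed
  then obtain c where cN: "c \<in> N" and cD: "c \<notin> cenmod M" by blast
  have cc: "c \<in> carrier G" using cN subgroup.subset[OF Nsg] by blast
  have cM: "c \<notin> M" using cD cenmod_normal(2)[OF Mn] by blast
  obtain x where xc: "x \<in> carrier G" and cxM: "commutator G c x \<notin> M"
    using cD cc unfolding cenmod_def by auto
  have a0M: "commutator G x c \<notin> M"
  proof
    assume "commutator G x c \<in> M"
    then have "inv (commutator G x c) \<in> M" by simp
    then show False using cxM xc cc by (simp add: comm_inv)
  qed
  have Asg: "subgroup (commset G c) G" using h3 cc by blast
  have An: "commset G c \<lhd> G" by (rule commset_normal[OF cc Asg])
  define L where "L = M <#> commset G c"
  have Ln: "L \<lhd> G" unfolding L_def by (rule normal_subgroup_set_mult_closed[OF Mn An])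
  have one_A: "\<one> \<in> commset G c" by (rule subgroup.one_closed[OF Asg])
  have MsubL: "M \<subseteq> L"
  proof
    fix m assume "m \<in> M"
    then have "m \<otimes> \<one> \<in> L" unfolding L_def set_mult_def using one_A by blast
    then show "m \<in> L" using \<open>m \<in> M\<close> by simp
  qed
  have a0A: "commutator G x c \<in> commset G c" using xc unfolding commset_def by blast
  have "\<one> \<otimes> commutator G x c \<in> L"
    unfolding L_def set_mult_def using a0A Mnorm.one_closed by blast
  then have a0L: "commutator G x c \<in> L" using xc cc by simp
  have "L \<noteq> M" using a0L a0M by blast
  then have "L \<notin> A" using Mmax MsubL by blast
  then have "N \<subseteq> L" using Ln unfolding A_def by blast
  then have "c \<in> L" using cN by blast
  then obtain m a where m: "m \<in> M" and a: "a \<in> commset G c" and cma: "c = m \<otimes> a"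
    unfolding L_def set_mult_def by blast
  obtain y where yc: "y \<in> carrier G" and ay: "a = commutator G y c"
    using a unfolding commset_def by blast
  have mc: "m \<in> carrier G" using m by simp
  have ac: "a \<in> carrier G" using ay yc cc by simp
  have "c \<otimes> inv a = m" using cma mc ac by (simp add: m_assoc)
  then have "inv y \<otimes> c \<otimes> y = m" using comm_conjclass[OF cc yc] ay by simp
  then have "y \<otimes> (inv y \<otimes> c \<otimes> y) \<otimes> inv y \<in> M" using Mnorm.inv_op_closed2[OF yc m] by simp
  then have "c \<in> M" using yc cc by (simp add: m_assoc)
  then show False using cM by blast
qed

theorem mainTheorem8:
  fixes G :: "('a, 'b) monoid_scheme"
  assumes "group G"
    and "finitely_generated G"
    and "\<forall>g \<in> carrier G. subgroup (commset G g) G"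
    and "\<forall>g. (\<forall>i. g i \<in> carrier G) \<longrightarrow> (\<Inter>n. commset G (lncomm G g n)) = {\<one>\<^bsub>G\<^esub>}"
  shows "\<forall>k \<ge> 1. lower_central G k = {\<one>\<^bsub>G\<^esub>} \<or> lower_central G k \<noteq> lower_central G (Suc k)"
proof (intro allI impI)
  fix k :: nat assume "k \<ge> 1"
  then obtain i where k: "k = Suc i" by (cases k) auto
  show "lower_central G k = {\<one>\<^bsub>G\<^esub>} \<or> lower_central G k \<noteq> lower_central G (Suc k)"
    unfolding k using group.main_aux[OF assms(1,2,3)] by blast
qed

end
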